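(* Let $m\in\mathbb N$, $M\in{\rm Mat}_m(\mathbb Z)$, and let $S\in{\rm Mat}_m(\mathbb Z)\cap GL_m(\mathbb Q)$ be such that $S^{-1}MS$ is the rational canonical form of $M$. Then for every prime $p$ with $\gcd(\det(S),p)=1$ and for which $M$ has finite $\mathbb Z_p$-order $k$, the move graph $\Gamma_{M,\,p}$ contains a directed $k$-cycle.
   Context: $\mathbb Z_n$ denotes the integers modulo $n$. For $M\in{\rm Mat}_m(\mathbb Z)$, the move graph $\Gamma_{M,\,n}$ is the directed graph with vertex set $\mathbb Z_n^m$ and arc set $\{({\bf x},{\bf y}) : {\bf y}^T=M{\bf x}^T \text{ in } \mathbb Z_n^m\}$ (loops allowed). The $\mathbb Z_n$-order of $M$ is the least positive integer $k$ (if it exists) such that $M^k$ acts as the identity on $\mathbb Z_n^m$. A directed $k$-cycle is a cycle of length $k$ in the underlying undirected graph such that in the induced directed subgraph on it every vertex has in-degree and out-degree $1$ (a loop counts as a directed $1$-cycle, a pair of opposite arcs as a directed $2$-cycle). *)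

theory Defs
  imports "Jordan_Normal_Form.Determinant" "HOL-Computational_Algebra.Polynomial"
begin

definition companion_mat :: "'a :: comm_ring_1 poly \<Rightarrow> 'a mat" where
  "companion_mat f = mat (degree f) (degree f)
     (\<lambda>(i, j). if j = degree f - 1 then - coeff f i
               else if i = j + 1 then 1 else 0)"

definition rational_canonical_form :: "rat mat \<Rightarrow> bool" where
  "rational_canonical_form R \<longleftrightarrow>
     (\<exists>fs :: rat poly list.
        (\<forall>f \<in> set fs. lead_coeff f = 1 \<and> degree f \<ge> 1) \<and>
        (\<forall>i. Suc i < length fs \<longrightarrow> fs ! i dvd fs ! Suc i) \<and>
        R = diag_block_mat (map companion_mat fs))"

definition is_rcf_of :: "rat mat \<Rightarrow> int mat \<Rightarrow> bool" where
  "is_rcf_of R M \<longleftrightarrow> rational_canonical_form R \<and> similar_mat (map_mat rat_of_int M) R"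

(* vertex set Z_n^m, elements represented by integer vectors with entries in {0..<n} *)
definition Zn_vecs :: "nat \<Rightarrow> int \<Rightarrow> int vec set" where
  "Zn_vecs m n = {x. dim_vec x = m \<and> (\<forall>i < m. 0 \<le> x $ i \<and> x $ i < n)}"

definition Zn_act :: "int mat \<Rightarrow> int \<Rightarrow> int vec \<Rightarrow> int vec" where
  "Zn_act M n x = map_vec (\<lambda>a. a mod n) (M *\<^sub>v x)"

definition move_arc :: "int mat \<Rightarrow> int \<Rightarrow> int vec \<Rightarrow> int vec \<Rightarrow> bool" where
  "move_arc M n x y \<longleftrightarrow> x \<in> Zn_vecs (dim_col M) n \<and> y \<in> Zn_vecs (dim_col M) n
      \<and> y = Zn_act M n x"

definition acts_as_id :: "int mat \<Rightarrow> int \<Rightarrow> bool" where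
  "acts_as_id A n \<longleftrightarrow> (\<forall>x \<in> Zn_vecs (dim_col A) n. Zn_act A n x = x)"

definition has_Zn_order :: "int mat \<Rightarrow> int \<Rightarrow> nat \<Rightarrow> bool" where
  "has_Zn_order M n k \<longleftrightarrow> 0 < k \<and> acts_as_id (M ^\<^sub>m k) n \<and>
     (\<forall>j. 0 < j \<and> j < k \<longrightarrow> \<not> acts_as_id (M ^\<^sub>m j) n)"

(* directed k-cycle in a digraph with vertex set V and arc relation A:
   k distinct vertices x_0,...,x_(k-1) forming a cycle of the underlying graph
   (x_i adjacent to x_(i+1 mod k)) such that in the induced subgraph every vertex
   has in-degree and out-degree 1 (loops counted). Stated with the cycle
   already consistently oriented, which is equivalent. *)
definition has_directed_cycle :: "'v set \<Rightarrow> ('v \<Rightarrow> 'v \<Rightarrow> bool) \<Rightarrow> nat \<Rightarrow> bool" where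
  "has_directed_cycle V A k \<longleftrightarrow>
     (\<exists>xs. length xs = k \<and> k \<ge> 1 \<and> distinct xs \<and> set xs \<subseteq> V \<and>
        (\<forall>i < k. A (xs ! i) (xs ! ((i + 1) mod k))) \<and>
        (\<forall>v \<in> set xs. card {w \<in> set xs. A v w} = 1 \<and> card {u \<in> set xs. A u v} = 1))"

end

theory Submission
  imports Defs "HOL-Computational_Algebra.Primes" "HOL-Number_Theory.Cong"
begin


locale mvg =
  fixes m :: nat and M :: "int mat" and p :: nat
  assumes M: "M \<in> carrier_mat m m" and p1: "p > 1"
begin

definition cg :: "int vec \<Rightarrow> int vec \<Rightarrow> bool" where
  "cg u v \<longleftrightarrow> (\<forall>i<m. u $ i mod int p = v $ i mod int p)"

definition T :: "int vec \<Rightarrow> int vec" where "T u = M *\<^sub>v u"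

abbreviation It :: "nat \<Rightarrow> int vec \<Rightarrow> int vec" where "It j \<equiv> T ^^ j"

abbreviation V where "V \<equiv> carrier_vec m :: int vec set"

lemma cg_refl[simp]: "cg u u" by (simp add: cg_def)
lemma cg_sym: "cg u v \<Longrightarrow> cg v u" by (simp add: cg_def)
lemma cg_trans: "cg u v \<Longrightarrow> cg v w \<Longrightarrow> cg u w" by (simp add: cg_def)

lemma T_V[simp]: "u \<in> V \<Longrightarrow> T u \<in> V" using M by (simp add: T_def)
lemma It_V[simp]: "u \<in> V \<Longrightarrow> It j u \<in> V" by (induction j) auto

lemma cg_add: "u \<in> V \<Longrightarrow> v \<in> V \<Longrightarrow> u' \<in> V \<Longrightarrow> v' \<in> V \<Longrightarrow> cg u u' \<Longrightarrow> cg v v' \<Longrightarrow> cg (u + v) (u' + v')"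
  unfolding cg_def by (auto, metis mod_add_eq)

lemma cg_smult: "u \<in> V \<Longrightarrow> u' \<in> V \<Longrightarrow> cg u u' \<Longrightarrow> cg (c \<cdot>\<^sub>v u) (c \<cdot>\<^sub>v u')"
  unfolding cg_def by (auto, metis mod_mult_right_eq)

lemma cg_T: assumes "u \<in> V" "u' \<in> V" "cg u u'" shows "cg (T u) (T u')"
  unfolding cg_def
proof (intro allI impI)
  fix i assume i: "i < m"
  have "(T u) $ i = (\<Sum>j\<in>{0..<m}. row M i $ j * u $ j)"
    using M i assms by (simp add: T_def scalar_prod_def)
  moreover have "(T u') $ i = (\<Sum>j\<in>{0..<m}. row M i $ j * u' $ j)"
    using M i assms by (simp add: T_def scalar_prod_def)
  moreover have "(\<Sum>j\<in>{0..<m}. row M i $ j * u $ j) mod int p = (\<Sum>j\<in>{0..<m}. row M i $ j * u' $ j) mod int p"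
  proof -
    have "(\<Sum>j\<in>{0..<m}. row M i $ j * u $ j) mod int p = (\<Sum>j\<in>{0..<m}. (row M i $ j * u $ j) mod int p) mod int p"
      by (simp add: mod_sum_eq)
    also have "\<dots> = (\<Sum>j\<in>{0..<m}. (row M i $ j * u' $ j) mod int p) mod int p"
    proof (rule arg_cong[where f="\<lambda>x. x mod int p"], rule sum.cong)
      fix j assume "j \<in> {0..<m}"
      then have "u $ j mod int p = u' $ j mod int p" using assms(3) by (auto simp: cg_def)
      then show "(row M i $ j * u $ j) mod int p = (row M i $ j * u' $ j) mod int p"
        by (metis mod_mult_right_eq)
    qed simp
    also have "\<dots> = (\<Sum>j\<in>{0..<m}. row M i $ j * u' $ j) mod int p"
      by (simp add: mod_sum_eq)
    finally show ?thesis .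
  qed
  ultimately show "T u $ i mod int p = T u' $ i mod int p" by simp
qed

lemma cg_It: "u \<in> V \<Longrightarrow> u' \<in> V \<Longrightarrow> cg u u' \<Longrightarrow> cg (It j u) (It j u')"
  by (induction j) (auto intro: cg_T)

lemma T_add: "u \<in> V \<Longrightarrow> v \<in> V \<Longrightarrow> T (u + v) = T u + T v"
  using M by (simp add: T_def mult_add_distrib_mat_vec)

lemma T_smult: "u \<in> V \<Longrightarrow> T (c \<cdot>\<^sub>v u) = c \<cdot>\<^sub>v T u"
  using M unfolding T_def by (intro eq_vecI) auto

lemma It_add: "u \<in> V \<Longrightarrow> v \<in> V \<Longrightarrow> It j (u + v) = It j u + It j v"
  by (induction j) (auto simp: T_add)

lemma It_smult: "u \<in> V \<Longrightarrow> It j (c \<cdot>\<^sub>v u) = c \<cdot>\<^sub>v It j u"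
  by (induction j) (auto simp: T_smult)

lemma It_comp: "It (i + j) u = It i (It j u)"
  by (simp add: funpow_add)

lemma It_zero: "It j (0\<^sub>v m) = 0\<^sub>v m"
proof (induction j)
  case (Suc j)
  have "M *\<^sub>v 0\<^sub>v m = 0\<^sub>v m" using M by (intro eq_vecI) auto
  then show ?case using Suc by (simp add: T_def)
qed simp

lemma pow_It: "u \<in> V \<Longrightarrow> (M ^\<^sub>m j) *\<^sub>v u = It j u"
proof (induction j arbitrary: u)
  case 0 then show ?case using M by simp
next
  case (Suc j)
  have "(M ^\<^sub>m Suc j) *\<^sub>v u = (M ^\<^sub>m j) *\<^sub>v (M *\<^sub>v u)"
    using M Suc.prems by (simp del: assoc_mult_mat_vec add: assoc_mult_mat_vec[of _ m m _ m])
  also have "\<dots> = It j (T u)" using Suc M by (simp add: T_def[symmetric])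
  also have "\<dots> = It (Suc j) u" by (simp add: funpow_Suc_right del: funpow.simps)
  finally show ?case .
qed


primrec vs :: "(nat \<Rightarrow> int vec) \<Rightarrow> nat \<Rightarrow> int vec" where
  "vs f 0 = 0\<^sub>v m"
| "vs f (Suc n) = vs f n + f n"

lemma vs_V: "(\<And>l. l < n \<Longrightarrow> f l \<in> V) \<Longrightarrow> vs f n \<in> V"
  by (induction n) auto

lemma vs_index: "(\<And>l. l < n \<Longrightarrow> f l \<in> V) \<Longrightarrow> i < m \<Longrightarrow> vs f n $ i = (\<Sum>l<n. f l $ i)"
proof (induction n)
  case (Suc n)
  have "f n \<in> V" using Suc.prems by auto
  then have "(vs f n + f n) $ i = vs f n $ i + f n $ i" using Suc.prems(2) by (simp add: carrier_vecD)
  then show ?case using Suc by simp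
qed simp

lemma It_vs: "(\<And>l. l < n \<Longrightarrow> f l \<in> V) \<Longrightarrow> It a (vs f n) = vs (\<lambda>l. It a (f l)) n"
proof (induction n)
  case 0 then show ?case by (simp add: It_zero)
next
  case (Suc n)
  then show ?case by (simp add: It_add vs_V)
qed

definition prj :: "int \<Rightarrow> nat \<Rightarrow> nat \<Rightarrow> int vec \<Rightarrow> int vec" where
  "prj c q j u = c \<cdot>\<^sub>v vs (\<lambda>l. It (l * j) u) q"

lemma prj_V[simp]: "u \<in> V \<Longrightarrow> prj c q j u \<in> V"
  unfolding prj_def by (auto intro: vs_V)

lemma prj_index: "u \<in> V \<Longrightarrow> i < m \<Longrightarrow> prj c q j u $ i = c * (\<Sum>l<q. It (l * j) u $ i)"
  unfolding prj_def using vs_V[of q "\<lambda>l. It (l * j) u"] by (simp add: vs_index)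

lemma It_prj: "u \<in> V \<Longrightarrow> It a (prj c q j u) = prj c q j (It a u)"
proof -
  assume u: "u \<in> V"
  have "It a (prj c q j u) = c \<cdot>\<^sub>v It a (vs (\<lambda>l. It (l * j) u) q)"
    unfolding prj_def using u by (simp add: It_smult vs_V)
  also have "\<dots> = c \<cdot>\<^sub>v vs (\<lambda>l. It a (It (l * j) u)) q" using u by (simp add: It_vs)
  also have "\<dots> = prj c q j (It a u)" unfolding prj_def
    by (simp add: It_comp[symmetric] add.commute)
  finally show ?thesis .
qed

definition zc :: "int vec \<Rightarrow> bool" where "zc u \<longleftrightarrow> cg u (0\<^sub>v m)"

definition fx :: "nat \<Rightarrow> int vec set \<Rightarrow> bool" where
  "fx j U \<longleftrightarrow> (\<forall>u\<in>U. cg (It j u) u)"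

definition subsp :: "int vec set \<Rightarrow> bool" where
  "subsp U \<longleftrightarrow> U \<subseteq> V \<and> 0\<^sub>v m \<in> U \<and> (\<forall>u\<in>U. \<forall>v\<in>U. u + v \<in> U) \<and> (\<forall>u\<in>U. \<forall>c. c \<cdot>\<^sub>v u \<in> U)
     \<and> (\<forall>u\<in>U. \<forall>v\<in>V. cg u v \<longrightarrow> v \<in> U) \<and> (\<forall>u\<in>U. T u \<in> U)"

lemma subsp_It: "subsp U \<Longrightarrow> u \<in> U \<Longrightarrow> It j u \<in> U"
  by (induction j) (auto simp: subsp_def)

lemma fx_add: "U \<subseteq> V \<Longrightarrow> fx a U \<Longrightarrow> fx b U \<Longrightarrow> fx (a + b) U"
  unfolding fx_def
proof
  fix u assume U: "U \<subseteq> V" and a: "\<forall>u\<in>U. cg (It a u) u" and b: "\<forall>u\<in>U. cg (It b u) u" and u: "u \<in> U"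
  have "cg (It a (It b u)) (It a u)" using U u b by (intro cg_It) auto
  then show "cg (It (a + b) u) u" using a u by (auto simp: It_comp intro: cg_trans)
qed

lemma fx_sub: "U \<subseteq> V \<Longrightarrow> fx (a + b) U \<Longrightarrow> fx b U \<Longrightarrow> fx a U"
  unfolding fx_def
proof
  fix u assume U: "U \<subseteq> V" and a: "\<forall>u\<in>U. cg (It (a + b) u) u" and b: "\<forall>u\<in>U. cg (It b u) u" and u: "u \<in> U"
  have "cg (It a (It b u)) (It a u)" using U u b by (intro cg_It) auto
  then show "cg (It a u) u" using a u by (auto simp: It_comp intro: cg_trans cg_sym)
qed

lemma fx_0: "U \<subseteq> V \<Longrightarrow> fx 0 U" by (simp add: fx_def)

lemma fx_mult: "U \<subseteq> V \<Longrightarrow> fx a U \<Longrightarrow> fx (l * a) U"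
  by (induction l) (auto simp: fx_0 fx_add)

lemma fx_dvd: assumes U: "U \<subseteq> V" and d: "fx d U" and "d > 0"
  and min: "\<And>e. 0 < e \<Longrightarrow> e < d \<Longrightarrow> \<not> fx e U"
  shows "fx j U \<longleftrightarrow> d dvd j"
proof
  assume j: "fx j U"
  have "fx (j div d * d) U" using fx_mult[OF U d] .
  moreover have "j = j mod d + j div d * d" by simp
  ultimately have "fx (j mod d) U" using j fx_sub[OF U] by metis
  moreover have "j mod d < d" using \<open>d > 0\<close> by simp
  ultimately have "j mod d = 0" using min by (cases "j mod d = 0") auto
  then show "d dvd j" by auto
next
  assume "d dvd j"
  then obtain l where "j = d * l" by (auto elim!: dvdE)
  then have "j = l * d" by simp
  then show "fx j U" using fx_mult[OF U d] by simp
qed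


lemma dimV: "u \<in> V \<Longrightarrow> dim_vec u = m" by (simp add: carrier_vecD)

definition nm :: "int vec \<Rightarrow> int vec" where "nm u = map_vec (\<lambda>a. a mod int p) u"

abbreviation Zn where "Zn \<equiv> Zn_vecs m (int p)"

lemma nm_index: "u \<in> V \<Longrightarrow> i < m \<Longrightarrow> nm u $ i = u $ i mod int p"
  unfolding nm_def using dimV[of u] by simp

lemma nm_dim: "dim_vec (nm u) = dim_vec u" unfolding nm_def by simp

lemma nm_V[simp]: "u \<in> V \<Longrightarrow> nm u \<in> V" 
  using nm_dim[of u] dimV[of u] by (auto simp only: carrier_vec_def mem_Collect_eq)

lemma nm_Zn: assumes u: "u \<in> V" shows "nm u \<in> Zn"
  unfolding Zn_vecs_def
proof (intro CollectI conjI allI impI)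
  show "dim_vec (nm u) = m" using nm_dim[of u] dimV[OF u] by simp
  fix i assume i: "i < m"
  have pp: "int p > 0" using p1 by simp
  show "0 \<le> nm u $ i" "nm u $ i < int p" using nm_index[OF u i] pp by auto
qed

lemma cg_nm: "u \<in> V \<Longrightarrow> cg u (nm u)" by (simp add: nm_index cg_def)

lemma Zn_V: "x \<in> Zn \<Longrightarrow> x \<in> V" unfolding Zn_vecs_def carrier_vec_def by auto

lemma nm_Zn_id: assumes x: "x \<in> Zn" shows "nm x = x"
proof (rule eq_vecI)
  show "dim_vec (nm x) = dim_vec x" by (rule nm_dim)
  fix i assume "i < dim_vec x"
  then have i: "i < m" using x by (simp add: Zn_vecs_def)
  then show "nm x $ i = x $ i" using nm_index[OF Zn_V[OF x] i] x by (simp add: Zn_vecs_def)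
qed

lemma nm_eq: "u \<in> V \<Longrightarrow> v \<in> V \<Longrightarrow> nm u = nm v \<longleftrightarrow> cg u v"
proof
  assume "u \<in> V" "v \<in> V" "nm u = nm v"
  then show "cg u v" unfolding cg_def
  proof (intro allI impI)
    fix i assume i: "i < m"
    have "u $ i mod int p = nm u $ i" using i \<open>u \<in> V\<close> by (simp add: nm_index)
    also have "\<dots> = nm v $ i" using \<open>nm u = nm v\<close> by simp
    also have "\<dots> = v $ i mod int p" using i \<open>v \<in> V\<close> by (simp add: nm_index)
    finally show "u $ i mod int p = v $ i mod int p" .
  qed
next
  assume "u \<in> V" "v \<in> V" "cg u v"
  then show "nm u = nm v" unfolding cg_def
    by (intro eq_vecI) (auto simp: nm_index nm_dim dimV)
qed

lemma finite_Zn: "finite Zn"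
proof -
  have "Zn \<subseteq> vec_of_list ` {xs. set xs \<subseteq> {0..<int p} \<and> length xs = m}"
  proof
    fix x assume x: "x \<in> Zn"
    have "x = vec_of_list (list_of_vec x)" by (rule vec_list[symmetric])
    moreover have "set (list_of_vec x) \<subseteq> {0..<int p}"
    proof
      fix a assume "a \<in> set (list_of_vec x)"
      then obtain i where i: "i < length (list_of_vec x)" "a = list_of_vec x ! i"
        by (auto simp only: in_set_conv_nth)
      then have "i < m" "a = x $ i" using x by (auto simp: Zn_vecs_def)
      then show "a \<in> {0..<int p}" using x by (simp add: Zn_vecs_def)
    qed
    moreover have "length (list_of_vec x) = m" using x by (simp add: Zn_vecs_def)
    ultimately show "x \<in> vec_of_list ` {xs. set xs \<subseteq> {0..<int p} \<and> length xs = m}" by blast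
  qed
  moreover have "finite {xs. set xs \<subseteq> {0..<int p} \<and> length xs = m}"
    by (rule finite_lists_length_eq) simp
  ultimately show ?thesis by (meson finite_imageI finite_subset)
qed

lemma card_less: assumes "A \<subseteq> U" "U \<subseteq> V" "b \<in> U" "b \<notin> A"
  and Acl: "\<forall>u\<in>A. \<forall>v\<in>V. cg u v \<longrightarrow> v \<in> A"
  and Ucl: "\<forall>u\<in>U. \<forall>v\<in>V. cg u v \<longrightarrow> v \<in> U"
  shows "card (A \<inter> Zn) < card (U \<inter> Zn)"
proof (rule psubset_card_mono)
  show "finite (U \<inter> Zn)" using finite_Zn by simp
  have bV: "b \<in> V" using assms by auto
  have "nm b \<in> U" using Ucl assms(3) bV cg_nm by auto
  moreover have "nm b \<notin> A" using Acl bV cg_nm cg_sym assms(4) nm_V by blast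
  ultimately show "A \<inter> Zn \<subset> U \<inter> Zn" using assms(1) nm_Zn[OF bV] by blast
qed

lemma T_zero: "T (0\<^sub>v m) = 0\<^sub>v m" using It_zero[of 1] by simp

lemma zc_zero[simp]: "zc (0\<^sub>v m)" by (simp add: zc_def)

lemma subsp_vs: "subsp U \<Longrightarrow> (\<And>l. l < n \<Longrightarrow> f l \<in> U) \<Longrightarrow> vs f n \<in> U"
  by (induction n) (auto simp: subsp_def)

end

locale mvg2 = mvg +
  fixes K0 :: nat
  assumes K0: "K0 > 0" "\<And>u. u \<in> V \<Longrightarrow> cg (It K0 u) u" and pprime: "prime p"
begin

definition ord :: "int vec set \<Rightarrow> nat" where "ord U = (LEAST j. 0 < j \<and> fx j U)"

lemma ord_props: assumes "U \<subseteq> V"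
  shows "0 < ord U" "fx (ord U) U" "\<And>e. 0 < e \<Longrightarrow> e < ord U \<Longrightarrow> \<not> fx e U"
proof -
  have ex: "0 < K0 \<and> fx K0 U" using K0 assms by (auto simp: fx_def)
  show "0 < ord U" "fx (ord U) U" unfolding ord_def using LeastI[of "\<lambda>j. 0 < j \<and> fx j U", OF ex] by auto
  show "\<And>e. 0 < e \<Longrightarrow> e < ord U \<Longrightarrow> \<not> fx e U" unfolding ord_def using not_less_Least by blast
qed

lemma ord_dvd: "U \<subseteq> V \<Longrightarrow> fx j U \<longleftrightarrow> ord U dvd j"
  by (rule fx_dvd[OF _ ord_props(2) ord_props(1) ord_props(3)])

end


context mvg begin

lemma idx_add: assumes "u \<in> V" "v \<in> V" "i < m" shows "(u + v) $ i = u $ i + v $ i"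
proof -
  have "dim_vec v = m" by (rule carrier_vecD[OF assms(2)])
  then show ?thesis using assms(3) by (simp only: index_add_vec)
qed

lemma idx_smult: assumes "u \<in> V" "i < m" shows "(c \<cdot>\<^sub>v u) $ i = c * u $ i"
proof -
  have "dim_vec u = m" by (rule carrier_vecD[OF assms(1)])
  then show ?thesis using assms(2) by (simp only: index_smult_vec)
qed

lemma prj_add_idx: assumes "u \<in> V" "v \<in> V" "i < m"
  shows "prj c q j (u + v) $ i = prj c q j u $ i + prj c q j v $ i"
  using assms by (simp add: prj_index It_add idx_add sum.distrib distrib_left)

lemma prj_smult_idx: assumes "u \<in> V" "i < m"
  shows "prj c q j (d \<cdot>\<^sub>v u) $ i = d * prj c q j u $ i"
  using assms by (simp add: prj_index It_smult idx_smult sum_distrib_left algebra_simps)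

lemma mod_sum_cong: "(\<And>l. l \<in> A \<Longrightarrow> f l mod (n::int) = g l mod n) \<Longrightarrow> sum f A mod n = sum g A mod n"
proof -
  assume e: "\<And>l. l \<in> A \<Longrightarrow> f l mod (n::int) = g l mod n"
  have "sum f A mod n = (\<Sum>l\<in>A. f l mod n) mod n" by (rule mod_sum_eq[symmetric])
  also have "(\<Sum>l\<in>A. f l mod n) = (\<Sum>l\<in>A. g l mod n)" using e by (rule sum.cong[OF refl])
  also have "(\<Sum>l\<in>A. g l mod n) mod n = sum g A mod n" by (rule mod_sum_eq)
  finally show ?thesis .
qed

lemma mod_mult_cong_left: "(a::int) mod n = b mod n \<Longrightarrow> (c * a) mod n = (c * b) mod n"
proof -
  assume h: "a mod n = b mod n"
  have "c * a mod n = c * (a mod n) mod n" by (rule mod_mult_right_eq[symmetric])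
  also have "\<dots> = c * (b mod n) mod n" by (simp only: h)
  also have "\<dots> = c * b mod n" by (rule mod_mult_right_eq)
  finally show ?thesis .
qed

lemma prj_cg: assumes "u \<in> V" "u' \<in> V" "cg u u'" shows "cg (prj c q j u) (prj c q j u')"
  unfolding cg_def
proof (intro allI impI)
  fix i assume i: "i < m"
  have e: "It (l * j) u $ i mod int p = It (l * j) u' $ i mod int p" for l
  proof -
    have "cg (It (l * j) u) (It (l * j) u')" by (rule cg_It[OF assms])
    then show ?thesis using i unfolding cg_def by blast
  qed
  have "(\<Sum>l<q. It (l * j) u $ i) mod int p = (\<Sum>l<q. It (l * j) u' $ i) mod int p"
    by (rule mod_sum_cong) (rule e)
  then have "(c * (\<Sum>l<q. It (l * j) u $ i)) mod int p = (c * (\<Sum>l<q. It (l * j) u' $ i)) mod int p"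
    by (rule mod_mult_cong_left)
  then show "prj c q j u $ i mod int p = prj c q j u' $ i mod int p"
    by (simp only: prj_index[OF assms(1) i] prj_index[OF assms(2) i])
qed

lemma prj_T: "u \<in> V \<Longrightarrow> prj c q j (T u) = T (prj c q j u)"
  using It_prj[of u 1] by simp


lemma cg_dvd: "cg u v \<longleftrightarrow> (\<forall>i<m. int p dvd u $ i - v $ i)"
  unfolding cg_def by (simp add: mod_eq_dvd_iff)

lemma zero_idx: "i < m \<Longrightarrow> 0\<^sub>v m $ i = (0::int)" by simp

lemma zc_dvd: "zc u \<longleftrightarrow> (\<forall>i<m. int p dvd u $ i)"
  unfolding zc_def cg_dvd by (simp add: zero_idx)

lemma It_comm: "It a (It b u) = It b (It a u)"
  by (metis It_comp add.commute)

lemma T_It: "T (It a u) = It a (T u)"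
  using It_comm[of 1 a u] by simp

lemma piA: assumes U: "U \<subseteq> V" and fxK: "fx (q * j) U" and w: "w \<in> U"
  shows "cg (It j (prj c q j w)) (prj c q j w)"
proof -
  have wV: "w \<in> V" using U w by auto
  have "It j (prj c q j w) = prj c q j (It j w)" by (rule It_prj[OF wV])
  moreover have "cg (prj c q j (It j w)) (prj c q j w)"
    unfolding cg_dvd
  proof (intro allI impI)
    fix i assume i: "i < m"
    define x where "x l = It (l * j) w $ i" for l
    have s1: "prj c q j (It j w) $ i = c * (\<Sum>l<q. x (Suc l))"
      using prj_index[OF It_V[OF wV] i] unfolding x_def by (simp add: It_comp[symmetric] add.commute)
    have s0: "prj c q j w $ i = c * (\<Sum>l<q. x l)"
      using prj_index[OF wV i] unfolding x_def by simp
    have "(\<Sum>l<Suc q. x l) = x 0 + (\<Sum>l<q. x (Suc l))" by (rule sum.lessThan_Suc_shift)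
    moreover have "(\<Sum>l<Suc q. x l) = (\<Sum>l<q. x l) + x q" by simp
    ultimately have diff: "(\<Sum>l<q. x (Suc l)) - (\<Sum>l<q. x l) = x q - x 0" by simp
    have "x 0 = w $ i" unfolding x_def by simp
    moreover have "int p dvd It (q * j) w $ i - w $ i" using fxK w i unfolding fx_def cg_dvd by blast
    ultimately have "int p dvd x q - x 0" unfolding x_def by simp
    then have "int p dvd c * ((\<Sum>l<q. x (Suc l)) - (\<Sum>l<q. x l))" using diff by simp
    then show "int p dvd prj c q j (It j w) $ i - prj c q j w $ i"
      using s1 s0 by (simp add: right_diff_distrib)
  qed
  ultimately show ?thesis by simp
qed

lemma piId: assumes wV: "w \<in> V" and fj: "cg (It j w) w" and c: "(int q * c) mod int p = 1"
  shows "cg (prj c q j w) w"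
  unfolding cg_dvd
proof (intro allI impI)
  fix i assume i: "i < m"
  have "fx j {w}" using fj by (simp add: fx_def)
  then have fl: "fx (l * j) {w}" for l using fx_mult[of "{w}"] wV by simp
  have dl: "int p dvd It (l * j) w $ i - w $ i" for l using fl[of l] i unfolding fx_def cg_dvd by simp
  have "int p dvd (\<Sum>l<q. It (l * j) w $ i - w $ i)" by (rule dvd_sum) (rule dl)
  then have d1: "int p dvd (\<Sum>l<q. It (l * j) w $ i) - int q * w $ i"
    by (simp add: sum_subtractf)
  have "int p dvd int q * c - 1" using c p1 by (simp add: mod_eq_dvd_iff[symmetric])
  then have d2: "int p dvd (int q * c - 1) * w $ i" by simp
  have "c * (\<Sum>l<q. It (l * j) w $ i) - w $ i = c * ((\<Sum>l<q. It (l * j) w $ i) - int q * w $ i) + (int q * c - 1) * w $ i"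
    by (simp add: algebra_simps)
  moreover have "int p dvd c * ((\<Sum>l<q. It (l * j) w $ i) - int q * w $ i) + (int q * c - 1) * w $ i"
    using d1 d2 by simp
  ultimately show "int p dvd prj c q j w $ i - w $ i" using prj_index[OF wV i] by simp
qed


lemma It_zero': "It j (0\<^sub>v m) = 0\<^sub>v m" by (rule It_zero)

lemma A_subsp: assumes "subsp U" shows "subsp {w\<in>U. cg (It j w) w}"
proof -
  have UV: "U \<subseteq> V" using assms by (simp add: subsp_def)
  have cl: "\<forall>u\<in>U. \<forall>v\<in>U. u + v \<in> U" "\<forall>u\<in>U. \<forall>c. c \<cdot>\<^sub>v u \<in> U" "\<forall>u\<in>U. \<forall>v\<in>V. cg u v \<longrightarrow> v \<in> U"
    "\<forall>u\<in>U. T u \<in> U" "0\<^sub>v m \<in> U" using assms by (auto simp: subsp_def)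
  show ?thesis unfolding subsp_def
  proof (intro conjI ballI allI impI)
    show "{w \<in> U. cg (It j w) w} \<subseteq> V" using UV by auto
    show "0\<^sub>v m \<in> {w \<in> U. cg (It j w) w}" using cl(5) by (simp add: It_zero)
  next
    fix u v assume u: "u \<in> {w \<in> U. cg (It j w) w}" and v: "v \<in> {w \<in> U. cg (It j w) w}"
    have uV: "u \<in> V" "v \<in> V" using u v UV by auto
    have "It j (u + v) = It j u + It j v" using It_add uV by blast
    moreover have "cg (It j u + It j v) (u + v)" using u v uV by (intro cg_add) auto
    ultimately show "u + v \<in> {w \<in> U. cg (It j w) w}" using cl(1) u v by auto
  next
    fix u and d :: int assume u: "u \<in> {w \<in> U. cg (It j w) w}"
    have uV: "u \<in> V" using u UV by auto
    have "It j (d \<cdot>\<^sub>v u) = d \<cdot>\<^sub>v It j u" using It_smult uV by blast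
    moreover have "cg (d \<cdot>\<^sub>v It j u) (d \<cdot>\<^sub>v u)" using u uV by (intro cg_smult) auto
    ultimately show "d \<cdot>\<^sub>v u \<in> {w \<in> U. cg (It j w) w}" using cl(2) u by auto
  next
    fix u v assume u: "u \<in> {w \<in> U. cg (It j w) w}" and v: "v \<in> V" and uv: "cg u v"
    have uV: "u \<in> V" using u UV by auto
    have "cg (It j v) (It j u)" using cg_It[OF v uV cg_sym[OF uv]] .
    then have "cg (It j v) v" using u uv by (auto intro: cg_trans)
    then show "v \<in> {w \<in> U. cg (It j w) w}" using cl(3) u v uv by auto
  next
    fix u assume u: "u \<in> {w \<in> U. cg (It j w) w}"
    have uV: "u \<in> V" using u UV by auto
    have "cg (T (It j u)) (T u)" using u uV by (intro cg_T) auto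
    then have "cg (It j (T u)) (T u)" by (simp add: T_It)
    then show "T u \<in> {w \<in> U. cg (It j w) w}" using cl(4) u by auto
  qed
qed

lemma prj_zero_idx: "i < m \<Longrightarrow> prj c q j (0\<^sub>v m) $ i = 0"
  using prj_index[of "0\<^sub>v m" i c q j] by (simp add: It_zero)

lemma B_subsp: assumes "subsp U" shows "subsp {w\<in>U. zc (prj c q j w)}"
proof -
  have UV: "U \<subseteq> V" using assms by (simp add: subsp_def)
  have cl: "\<forall>u\<in>U. \<forall>v\<in>U. u + v \<in> U" "\<forall>u\<in>U. \<forall>c. c \<cdot>\<^sub>v u \<in> U" "\<forall>u\<in>U. \<forall>v\<in>V. cg u v \<longrightarrow> v \<in> U"
    "\<forall>u\<in>U. T u \<in> U" "0\<^sub>v m \<in> U" using assms by (auto simp: subsp_def)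
  show ?thesis unfolding subsp_def
  proof (intro conjI ballI allI impI)
    show "{w \<in> U. zc (prj c q j w)} \<subseteq> V" using UV by auto
    show "0\<^sub>v m \<in> {w \<in> U. zc (prj c q j w)}" using cl(5) by (simp add: zc_dvd prj_zero_idx)
  next
    fix u v assume u: "u \<in> {w \<in> U. zc (prj c q j w)}" and v: "v \<in> {w \<in> U. zc (prj c q j w)}"
    have uV: "u \<in> V" "v \<in> V" using u v UV by auto
    have "zc (prj c q j (u + v))" unfolding zc_dvd
    proof (intro allI impI)
      fix i assume i: "i < m"
      have "int p dvd prj c q j u $ i" "int p dvd prj c q j v $ i" using u v i by (auto simp: zc_dvd)
      then show "int p dvd prj c q j (u + v) $ i" using prj_add_idx[OF uV i] by simp
    qed
    then show "u + v \<in> {w \<in> U. zc (prj c q j w)}" using cl(1) u v by auto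
  next
    fix u and d :: int assume u: "u \<in> {w \<in> U. zc (prj c q j w)}"
    have uV: "u \<in> V" using u UV by auto
    have "zc (prj c q j (d \<cdot>\<^sub>v u))" unfolding zc_dvd
    proof (intro allI impI)
      fix i assume i: "i < m"
      have "int p dvd prj c q j u $ i" using u i by (auto simp: zc_dvd)
      then show "int p dvd prj c q j (d \<cdot>\<^sub>v u) $ i" using prj_smult_idx[OF uV i] by simp
    qed
    then show "d \<cdot>\<^sub>v u \<in> {w \<in> U. zc (prj c q j w)}" using cl(2) u by auto
  next
    fix u v assume u: "u \<in> {w \<in> U. zc (prj c q j w)}" and v: "v \<in> V" and uv: "cg u v"
    have uV: "u \<in> V" using u UV by auto
    have "cg (prj c q j v) (prj c q j u)" by (rule prj_cg[OF v uV cg_sym[OF uv]])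
    then have "zc (prj c q j v)" using u unfolding zc_def by (auto intro: cg_trans)
    then show "v \<in> {w \<in> U. zc (prj c q j w)}" using cl(3) u v uv by auto
  next
    fix u assume u: "u \<in> {w \<in> U. zc (prj c q j w)}"
    have uV: "u \<in> V" using u UV by auto
    have "cg (T (prj c q j u)) (T (0\<^sub>v m))" using u uV by (intro cg_T) (auto simp: zc_def)
    then have "zc (prj c q j (T u))" unfolding zc_def using prj_T[OF uV] T_zero by simp
    then show "T u \<in> {w \<in> U. zc (prj c q j w)}" using cl(4) u by auto
  qed
qed

lemma decomp: assumes "u \<in> V" shows "u = prj c q j u + (u + (-1) \<cdot>\<^sub>v prj c q j u)"
proof (rule eq_vecI)
  have pV: "prj c q j u \<in> V" using assms by simp
  have sV: "u + (-1) \<cdot>\<^sub>v prj c q j u \<in> V" using assms pV by simp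
  show "dim_vec u = dim_vec (prj c q j u + (u + (-1) \<cdot>\<^sub>v prj c q j u))"
    using dimV[OF assms] dimV[OF pV] by simp
  fix i assume "i < dim_vec (prj c q j u + (u + (-1) \<cdot>\<^sub>v prj c q j u))"
  then have i: "i < m" using dimV[OF pV] by simp
  show "u $ i = (prj c q j u + (u + (-1) \<cdot>\<^sub>v prj c q j u)) $ i"
    using idx_add[OF pV sV i] idx_add[OF assms _ i, of "(-1) \<cdot>\<^sub>v prj c q j u"] idx_smult[OF pV i, of "-1"] pV by simp
qed

lemma B_mem: assumes U: "U \<subseteq> V" and fxK: "fx (q * j) U" and c: "(int q * c) mod int p = 1" and u: "u \<in> U"
  shows "zc (prj c q j (u + (-1) \<cdot>\<^sub>v prj c q j u))"
  unfolding zc_dvd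
proof (intro allI impI)
  fix i assume i: "i < m"
  have uV: "u \<in> V" using U u by auto
  have pV: "prj c q j u \<in> V" using uV by simp
  have "cg (prj c q j (prj c q j u)) (prj c q j u)"
    by (rule piId[OF pV piA[OF U fxK u] c])
  then have "int p dvd prj c q j (prj c q j u) $ i - prj c q j u $ i" using i by (simp add: cg_dvd)
  moreover have "prj c q j (u + (-1) \<cdot>\<^sub>v prj c q j u) $ i = prj c q j u $ i - prj c q j (prj c q j u) $ i"
    using prj_add_idx[OF uV _ i, of "(-1) \<cdot>\<^sub>v prj c q j u"] prj_smult_idx[OF pV i, of _ _ _ "-1"] pV by simp
  ultimately show "int p dvd prj c q j (u + (-1) \<cdot>\<^sub>v prj c q j u) $ i"
    by (metis dvd_minus_iff minus_diff_eq)
qed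

end

context mvg2 begin

lemma main: "subsp U \<Longrightarrow> \<exists>v\<in>U. \<forall>j. fx j {v} \<longrightarrow> fx j U"
proof (induction "card (U \<inter> Zn)" arbitrary: U rule: less_induct)
  case less
  have sU: "subsp U" by fact
  have UV: "U \<subseteq> V" using sU by (simp add: subsp_def)
  have cl: "\<forall>u\<in>U. \<forall>v\<in>U. u + v \<in> U" "\<forall>u\<in>U. \<forall>c. c \<cdot>\<^sub>v u \<in> U" "\<forall>u\<in>U. \<forall>v\<in>V. cg u v \<longrightarrow> v \<in> U"
    "\<forall>u\<in>U. T u \<in> U" "0\<^sub>v m \<in> U" using sU by (auto simp: subsp_def)
  define K where "K = ord U"
  have K0: "0 < K" and fxK: "fx K U" and minK: "\<And>e. 0 < e \<Longrightarrow> e < K \<Longrightarrow> \<not> fx e U"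
    using ord_props[OF UV] unfolding K_def by auto
  have Kdvd: "fx j U \<longleftrightarrow> K dvd j" for j using ord_dvd[OF UV] unfolding K_def by blast
  show ?case
  proof (cases "\<exists>q a. prime q \<and> q dvd K \<and> q \<noteq> p \<and> a \<in> U \<and> \<not> zc a \<and> cg (It (K div q) a) a")
    case True
    then obtain q a0 where q: "prime q" "q dvd K" "q \<noteq> p" and a0: "a0 \<in> U" "\<not> zc a0" "cg (It (K div q) a0) a0"
      by blast
    define j where "j = K div q"
    have Kqj: "K = q * j" using q(2) unfolding j_def by simp
    have q1: "q > 1" using q(1) prime_gt_1_nat by blast
    have j0: "0 < j" using K0 Kqj by (cases j) auto
    have jK: "j < K" using Kqj q1 j0 by simp
    have fxqj: "fx (q * j) U" using fxK Kqj by simp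
    have "coprime q p" by (rule primes_coprime[OF q(1) pprime q(3)])
    then have "coprime (int q) (int p)" by simp
    then obtain c where "[int q * c = 1] (mod int p)" using cong_solve_coprime_int by blast
    then have c: "(int q * c) mod int p = 1" using p1 by (simp add: cong_def)
    define A where "A = {w\<in>U. cg (It j w) w}"
    define B where "B = {w\<in>U. zc (prj c q j w)}"
    have sA: "subsp A" unfolding A_def by (rule A_subsp[OF sU])
    have sB: "subsp B" unfolding B_def by (rule B_subsp[OF sU])
    have AU: "A \<subseteq> U" and BU: "B \<subseteq> U" unfolding A_def B_def by auto
    have prjA: "prj c q j u \<in> A" if "u \<in> U" for u
    proof -
      have "vs (\<lambda>l. It (l * j) u) q \<in> U" by (rule subsp_vs[OF sU subsp_It[OF sU that]])
      then have "prj c q j u \<in> U" unfolding prj_def using cl(2) by simp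
      then show ?thesis unfolding A_def using piA[OF UV fxqj that] by blast
    qed
    have restB: "u + (-1) \<cdot>\<^sub>v prj c q j u \<in> B" if "u \<in> U" for u
    proof -
      have "prj c q j u \<in> U" using prjA[OF that] AU by blast
      then have "(-1) \<cdot>\<^sub>v prj c q j u \<in> U" using cl(2) by simp
      then have "u + (-1) \<cdot>\<^sub>v prj c q j u \<in> U" using cl(1) that by simp
      then show ?thesis unfolding B_def using B_mem[OF UV fxqj c that] by blast
    qed
    have AB0: "zc w" if "w \<in> A" "w \<in> B" for w
    proof -
      have wV: "w \<in> V" using that AU UV by blast
      have "cg (prj c q j w) w" using piId[OF wV _ c] that(1) unfolding A_def by blast
      moreover have "zc (prj c q j w)" using that(2) unfolding B_def by blast
      ultimately show ?thesis unfolding zc_def by (meson cg_sym cg_trans)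
    qed
    have Acl: "\<forall>u\<in>A. \<forall>v\<in>V. cg u v \<longrightarrow> v \<in> A" and Bcl: "\<forall>u\<in>B. \<forall>v\<in>V. cg u v \<longrightarrow> v \<in> B"
      using sA sB by (auto simp: subsp_def)
    obtain u1 where u1: "u1 \<in> U" "\<not> cg (It j u1) u1" using minK[OF j0 jK] unfolding fx_def by blast
    have b1: "u1 + (-1) \<cdot>\<^sub>v prj c q j u1 \<in> U" "u1 + (-1) \<cdot>\<^sub>v prj c q j u1 \<notin> A"
    proof -
      show "u1 + (-1) \<cdot>\<^sub>v prj c q j u1 \<in> U" using restB[OF u1(1)] BU by blast
      show "u1 + (-1) \<cdot>\<^sub>v prj c q j u1 \<notin> A"
      proof
        assume "u1 + (-1) \<cdot>\<^sub>v prj c q j u1 \<in> A"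
        then have "prj c q j u1 + (u1 + (-1) \<cdot>\<^sub>v prj c q j u1) \<in> A"
          using prjA[OF u1(1)] sA by (simp add: subsp_def)
        moreover have eq: "u1 = prj c q j u1 + (u1 + (-1) \<cdot>\<^sub>v prj c q j u1)"
          using u1(1) UV by (intro decomp) auto
        ultimately have "u1 \<in> A" by (simp only: eq[symmetric])
        then show False using u1 unfolding A_def by blast
      qed
    qed
    have ltA: "card (A \<inter> Zn) < card (U \<inter> Zn)"
      by (rule card_less[OF AU UV b1 Acl cl(3)])
    have a0A: "a0 \<in> A" using a0 unfolding A_def j_def by blast
    have a0B: "a0 \<notin> B" using AB0[OF a0A] a0(2) by blast
    have ltB: "card (B \<inter> Zn) < card (U \<inter> Zn)"
      by (rule card_less[OF BU UV a0(1) a0B Bcl cl(3)])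
    obtain a where a: "a \<in> A" "\<And>j'. fx j' {a} \<Longrightarrow> fx j' A" using less.hyps[OF ltA sA] by blast
    obtain b where b: "b \<in> B" "\<And>j'. fx j' {b} \<Longrightarrow> fx j' B" using less.hyps[OF ltB sB] by blast
    have aV: "a \<in> V" and bV: "b \<in> V" using a(1) b(1) AU BU UV by auto
    have abU: "a + b \<in> U" using a(1) b(1) AU BU cl(1) by blast
    show ?thesis
    proof (intro bexI[OF _ abU] allI impI)
      fix j' assume "fx j' {a + b}"
      then have h: "cg (It j' (a + b)) (a + b)" by (simp add: fx_def)
      define d where "d = It j' a + (-1) \<cdot>\<^sub>v a"
      define e where "e = b + (-1) \<cdot>\<^sub>v It j' b"
      have dA: "d \<in> A" unfolding d_def using sA a(1) subsp_It[OF sA a(1)] by (simp add: subsp_def)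
      have eB: "e \<in> B" unfolding e_def using sB b(1) subsp_It[OF sB b(1)] by (simp add: subsp_def)
      have dV: "d \<in> V" "e \<in> V" unfolding d_def e_def using aV bV by auto
      have de: "cg d e" unfolding cg_dvd
      proof (intro allI impI)
        fix i assume i: "i < m"
        have "int p dvd (It j' a + It j' b) $ i - (a + b) $ i" using h i It_add[OF aV bV] by (simp add: cg_dvd)
        then have "int p dvd (It j' a $ i + It j' b $ i) - (a $ i + b $ i)"
          using idx_add[OF It_V[OF aV] It_V[OF bV] i] idx_add[OF aV bV i] by simp
        moreover have "d $ i - e $ i = (It j' a $ i + It j' b $ i) - (a $ i + b $ i)"
          unfolding d_def e_def using idx_add[OF It_V[OF aV] _ i, of "(-1) \<cdot>\<^sub>v a"] idx_add[OF bV _ i, of "(-1) \<cdot>\<^sub>v It j' b"]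
            idx_smult[OF aV i, of "-1"] idx_smult[OF It_V[OF bV] i, of "-1"] aV bV by simp
        ultimately show "int p dvd d $ i - e $ i" by simp
      qed
      have dB: "d \<in> B" using Bcl eB dV(1) cg_sym[OF de] by blast
      have eA: "e \<in> A" using Acl dA dV(2) de by blast
      have zd: "zc d" using AB0[OF dA dB] .
      have ze: "zc e" using AB0[OF eA eB] .
      have ca: "cg (It j' a) a" unfolding cg_dvd
      proof (intro allI impI)
        fix i assume i: "i < m"
        have deq: "d $ i = It j' a $ i - a $ i" unfolding d_def
          using idx_add[OF It_V[OF aV] _ i, of "(-1) \<cdot>\<^sub>v a"] idx_smult[OF aV i, of "-1"] aV by simp
        have "int p dvd d $ i" using zd i unfolding zc_dvd by blast
        then show "int p dvd It j' a $ i - a $ i" using deq by simp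
      qed
      have cb: "cg (It j' b) b" unfolding cg_dvd
      proof (intro allI impI)
        fix i assume i: "i < m"
        have eeq: "e $ i = b $ i - It j' b $ i" unfolding e_def
          using idx_add[OF bV _ i, of "(-1) \<cdot>\<^sub>v It j' b"] idx_smult[OF It_V[OF bV] i, of "-1"] bV by simp
        have "int p dvd e $ i" using ze i unfolding zc_dvd by blast
        then have "int p dvd b $ i - It j' b $ i" using eeq by simp
        then show "int p dvd It j' b $ i - b $ i" by (metis dvd_minus_iff minus_diff_eq)
      qed
      have fA: "fx j' A" using a(2) ca by (simp add: fx_def)
      have fB: "fx j' B" using b(2) cb by (simp add: fx_def)
      show "fx j' U" unfolding fx_def
      proof
        fix u assume u: "u \<in> U"
        have uV: "u \<in> V" using u UV by auto
        have pA: "prj c q j u \<in> A" by (rule prjA[OF u])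
        have rB: "u + (-1) \<cdot>\<^sub>v prj c q j u \<in> B" by (rule restB[OF u])
        have pV: "prj c q j u \<in> V" and rV: "u + (-1) \<cdot>\<^sub>v prj c q j u \<in> V" using pA rB AU BU UV by auto
        have "cg (It j' (prj c q j u) + It j' (u + (-1) \<cdot>\<^sub>v prj c q j u)) (prj c q j u + (u + (-1) \<cdot>\<^sub>v prj c q j u))"
          using fA fB pA rB pV rV by (intro cg_add) (auto simp: fx_def)
        then have "cg (It j' (prj c q j u + (u + (-1) \<cdot>\<^sub>v prj c q j u))) (prj c q j u + (u + (-1) \<cdot>\<^sub>v prj c q j u))"
          using It_add[OF pV rV] by simp
        then show "cg (It j' u) u" by (simp only: decomp[OF uV, of c q j, symmetric])
      qed
    qed
  next
    case False
    note nq = False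
    obtain v where vU: "v \<in> U" and vprop: "(p dvd K \<longrightarrow> \<not> cg (It (K div p) v) v) \<and> (\<not> p dvd K \<and> K \<noteq> 1 \<longrightarrow> \<not> zc v)"
    proof (cases "p dvd K")
      case True
      have "0 < K div p" using True K0 p1 by (metis div_greater_zero_iff dvd_imp_le neq0_conv not_less0 less_trans zero_less_one)
      moreover have "K div p < K" using K0 p1 by simp
      ultimately obtain v where "v \<in> U" "\<not> cg (It (K div p) v) v" using minK unfolding fx_def by blast
      then show ?thesis using that True by blast
    next
      case nd: False
      show ?thesis
      proof (cases "K = 1")
        case True then show ?thesis using that nd cl(5) by blast
      next
        case False
        have "\<exists>v\<in>U. \<not> zc v"
        proof (rule ccontr)
          assume "\<not> (\<exists>v\<in>U. \<not> zc v)"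
          then have allz: "\<And>v. v \<in> U \<Longrightarrow> zc v" by blast
          have "fx 1 U" unfolding fx_def
          proof
            fix u assume u: "u \<in> U"
            have uV: "u \<in> V" using u UV by auto
            have "cg (T u) (T (0\<^sub>v m))" using allz[OF u] uV by (intro cg_T) (auto simp: zc_def)
            then have "cg (T u) u" using allz[OF u] T_zero unfolding zc_def by (metis cg_sym cg_trans)
            then show "cg (It 1 u) u" by simp
          qed
          then show False using minK[of 1] K0 False by simp
        qed
        then show ?thesis using that nd False by blast
      qed
    qed
    have vV: "v \<in> V" using vU UV by auto
    have sv: "{v} \<subseteq> V" using vV by simp
    define d where "d = ord {v}"
    have dprops: "fx j {v} \<longleftrightarrow> d dvd j" for j unfolding d_def using ord_dvd[OF sv] by blast
    have d0: "0 < d" unfolding d_def using ord_props(1)[OF sv] .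
    have "fx K {v}" using fxK vU by (simp add: fx_def)
    then have dK: "d dvd K" using dprops by blast
    have "d = K"
    proof (rule ccontr)
      assume ne: "d \<noteq> K"
      obtain t where Kt: "K = d * t" using dK by (auto elim!: dvdE)
      have "t \<noteq> 1" using ne Kt by auto
      moreover have "t \<noteq> 0" using Kt K0 by auto
      ultimately obtain q where qp: "prime q" "q dvd t" using prime_factor_nat by blast
      have qK: "q dvd K" using qp Kt by simp
      have "d dvd K div q"
      proof -
        obtain s where "t = q * s" using qp(2) by (auto elim!: dvdE)
        then have "K div q = d * s" using Kt qp(1) prime_gt_0_nat by (simp add: mult.left_commute)
        then show ?thesis by simp
      qed
      then have fq: "cg (It (K div q) v) v" using dprops by (simp add: fx_def)
      show False
      proof (cases "q = p")
        case True
        then show False using vprop fq qK by blast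
      next
        case qn: False
        have "\<not> zc v"
        proof (cases "p dvd K")
          case True
          show ?thesis
          proof
            assume "zc v"
            then have "cg (It (K div p) v) (It (K div p) (0\<^sub>v m))" using vV by (intro cg_It) (auto simp: zc_def)
            then have "cg (It (K div p) v) v" using \<open>zc v\<close> It_zero unfolding zc_def by (metis cg_sym cg_trans)
            then show False using vprop True by blast
          qed
        next
          case False
          have "K \<noteq> 1" using qK qp(1) by (metis nat_dvd_1_iff_1 not_prime_1)
          then show ?thesis using vprop False by blast
        qed
        then show False using nq qp(1) qK qn vU fq by blast
      qed
    qed
    show ?thesis
    proof (intro bexI[OF _ vU] allI impI)
      fix j assume "fx j {v}"
      then have "K dvd j" using dprops \<open>d = K\<close> by blast
      then show "fx j U" using Kdvd by blast
    qed
  qed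
qed

end



context mvg begin

lemma Zn_act_nm: "Zn_act M (int p) y = nm (T y)"
  by (simp add: Zn_act_def nm_def T_def)

lemma move_arc_iff: "move_arc M (int p) y z \<longleftrightarrow> y \<in> Zn \<and> z \<in> Zn \<and> z = nm (T y)"
  using M by (simp add: move_arc_def Zn_act_nm)

lemma nm_T_nm: "y \<in> V \<Longrightarrow> nm (T (nm y)) = nm (T y)"
proof -
  assume y: "y \<in> V"
  have "cg (T (nm y)) (T y)" using y by (intro cg_T) (auto intro: cg_sym cg_nm)
  then show ?thesis using y by (simp add: nm_eq)
qed

lemma acts_iff: "acts_as_id (M ^\<^sub>m j) (int p) \<longleftrightarrow> fx j V"
proof -
  have dc: "dim_col (M ^\<^sub>m j) = m" using M by simp
  have za: "Zn_act (M ^\<^sub>m j) (int p) x = nm (It j x)" if "x \<in> V" for x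
    using pow_It[OF that] by (simp add: Zn_act_def nm_def)
  show ?thesis
  proof
    assume a: "acts_as_id (M ^\<^sub>m j) (int p)"
    show "fx j V" unfolding fx_def
    proof
      fix u assume u: "u \<in> V"
      have x: "nm u \<in> Zn" using nm_Zn[OF u] .
      then have "Zn_act (M ^\<^sub>m j) (int p) (nm u) = nm u" using a dc by (simp add: acts_as_id_def)
      then have "nm (It j (nm u)) = nm (nm u)" using za[OF Zn_V[OF x]] nm_Zn_id[OF x] by simp
      then have c1: "cg (It j (nm u)) (nm u)" using Zn_V[OF x] by (simp add: nm_eq)
      have "cg (It j u) (It j (nm u))" using u by (intro cg_It cg_nm) auto
      then show "cg (It j u) u" using c1 cg_nm[OF u] by (meson cg_sym cg_trans)
    qed
  next
    assume f: "fx j V"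
    show "acts_as_id (M ^\<^sub>m j) (int p)" unfolding acts_as_id_def dc
    proof
      fix x assume x: "x \<in> Zn"
      have xV: "x \<in> V" using Zn_V[OF x] .
      have "cg (It j x) x" using f xV by (simp add: fx_def)
      then have "nm (It j x) = nm x" using xV by (simp add: nm_eq)
      then show "Zn_act (M ^\<^sub>m j) (int p) x = x" using za[OF xV] nm_Zn_id[OF x] by simp
    qed
  qed
qed

lemma cycle:
  assumes x: "x \<in> Zn" and k0: "0 < k" and xk: "cg (It k x) x"
    and xmin: "\<And>j. 0 < j \<Longrightarrow> j < k \<Longrightarrow> \<not> cg (It j x) x"
  shows "has_directed_cycle Zn (move_arc M (int p)) k"
proof -
  have xV: "x \<in> V" using Zn_V[OF x] .
  define xs where "xs = map (\<lambda>i. nm (It i x)) [0..<k]"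
  have len: "length xs = k" unfolding xs_def by simp
  have nth: "xs ! i = nm (It i x)" if "i < k" for i using that unfolding xs_def by simp
  have inZn: "set xs \<subseteq> Zn" unfolding xs_def using xV by (auto intro: nm_Zn)
  have shift: "cg x (It (j - i) x)" if "cg (It i x) (It j x)" "i < j" "j < k" for i j
  proof -
    have a: "cg (It (k - i) (It i x)) (It (k - i) (It j x))" using that(1) xV by (intro cg_It) auto
    have e1: "It (k - i) (It i x) = It (k - i + i) x" by (rule It_comp[symmetric])
    have e2: "k - i + i = k" using that by simp
    have e3: "It (k - i) (It j x) = It (k - i + j) x" by (rule It_comp[symmetric])
    have e4: "k - i + j = (j - i) + k" using that by simp
    have e5: "It ((j - i) + k) x = It (j - i) (It k x)" by (rule It_comp)
    have b: "cg (It k x) (It (j - i) (It k x))" using a unfolding e1 e2 e3 e4 e5 .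
    have c: "cg (It (j - i) (It k x)) (It (j - i) x)" using xk xV by (intro cg_It) auto
    show ?thesis using b c xk by (meson cg_sym cg_trans)
  qed
  have dist: "distinct xs"
    unfolding distinct_conv_nth len
  proof (intro allI impI)
    fix i j assume ij: "i < k" "j < k" "i \<noteq> j"
    show "xs ! i \<noteq> xs ! j"
    proof
      assume "xs ! i = xs ! j"
      then have e: "cg (It i x) (It j x)" using nth ij xV by (simp add: nm_eq)
      show False
      proof (cases "i < j")
        case True
        have "cg (It (j - i) x) x" using shift[OF e True ij(2)] by (rule cg_sym)
        then show False using xmin[of "j - i"] ij True by simp
      next
        case False
        then have "j < i" using ij by simp
        have "cg (It (i - j) x) x" using shift[OF cg_sym[OF e] \<open>j < i\<close> ij(1)] by (rule cg_sym)
        then show False using xmin[of "i - j"] ij \<open>j < i\<close> by simp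
      qed
    qed
  qed
  have step: "nm (T (xs ! i)) = xs ! ((i + 1) mod k)" if "i < k" for i
  proof -
    have "nm (T (xs ! i)) = nm (T (It i x))" using nth[OF that] nm_T_nm xV by simp
    also have "\<dots> = nm (It (Suc i) x)" by simp
    finally have s: "nm (T (xs ! i)) = nm (It (Suc i) x)" .
    show ?thesis
    proof (cases "i + 1 < k")
      case True
      then show ?thesis using s nth[OF True] by simp
    next
      case False
      then have "Suc i = k" using that by simp
      moreover have "nm (It k x) = nm (It 0 x)" using xk xV by (simp add: nm_eq)
      ultimately show ?thesis using s nth[OF k0] by simp
    qed
  qed
  have arc: "move_arc M (int p) (xs ! i) (xs ! ((i + 1) mod k))" if "i < k" for i
  proof -
    have i1: "(i + 1) mod k < k" using k0 by simp
    have "xs ! i \<in> set xs" "xs ! ((i + 1) mod k) \<in> set xs" using that i1 len by auto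
    then have "xs ! i \<in> Zn" "xs ! ((i + 1) mod k) \<in> Zn" using inZn by auto
    then show ?thesis using step[OF that] by (simp add: move_arc_iff)
  qed
  have out1: "card {w \<in> set xs. move_arc M (int p) v w} = 1" if v: "v \<in> set xs" for v
  proof -
    obtain i where i: "i < k" "v = xs ! i" using v len by (auto simp: in_set_conv_nth)
    have i1: "(i + 1) mod k < k" using k0 by simp
    have m1: "xs ! ((i + 1) mod k) \<in> set xs" using i1 len by auto
    have "{w \<in> set xs. move_arc M (int p) v w} = {xs ! ((i + 1) mod k)}"
    proof
      show "{xs ! ((i + 1) mod k)} \<subseteq> {w \<in> set xs. move_arc M (int p) v w}"
        using arc[OF i(1)] m1 i(2) by simp
      show "{w \<in> set xs. move_arc M (int p) v w} \<subseteq> {xs ! ((i + 1) mod k)}"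
        using step[OF i(1)] i(2) by (auto simp: move_arc_iff)
    qed
    then show ?thesis by simp
  qed
  have in1: "card {u \<in> set xs. move_arc M (int p) u v} = 1" if v: "v \<in> set xs" for v
  proof -
    obtain j where j: "j < k" "v = xs ! j" using v len by (auto simp: in_set_conv_nth)
    define i0 where "i0 = (j + k - 1) mod k"
    have i0k: "i0 < k" unfolding i0_def using k0 by simp
    have i0s: "(i0 + 1) mod k = j"
    proof -
      have "(i0 + 1) mod k = (j + k - 1 + 1) mod k" unfolding i0_def by (simp add: mod_Suc_eq)
      also have "j + k - 1 + 1 = j + k" using k0 by simp
      finally show ?thesis using j(1) by simp
    qed
    have "{u \<in> set xs. move_arc M (int p) u v} = {xs ! i0}"
    proof
      show "{xs ! i0} \<subseteq> {u \<in> set xs. move_arc M (int p) u v}"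
        using arc[OF i0k] i0s i0k len j by auto
      show "{u \<in> set xs. move_arc M (int p) u v} \<subseteq> {xs ! i0}"
      proof
        fix u assume u: "u \<in> {u \<in> set xs. move_arc M (int p) u v}"
        then obtain i where i: "i < k" "u = xs ! i" using len by (auto simp: in_set_conv_nth)
        have "xs ! ((i + 1) mod k) = xs ! j" using u step[OF i(1)] i j by (auto simp: move_arc_iff)
        then have "(i + 1) mod k = j" using dist len j(1) k0 by (simp add: nth_eq_iff_index_eq)
        then have "i = i0"
        proof (cases "i + 1 < k")
          case True
          then have "j = i + 1" using \<open>(i + 1) mod k = j\<close> by simp
          then show ?thesis unfolding i0_def using True by simp
        next
          case False
          then have "i + 1 = k" using i(1) by simp
          then have "j = 0" using \<open>(i + 1) mod k = j\<close> by simp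
          then show ?thesis unfolding i0_def using \<open>i + 1 = k\<close> by simp
        qed
        then show "u \<in> {xs ! i0}" using i by simp
      qed
    qed
    then show ?thesis by simp
  qed
  show ?thesis unfolding has_directed_cycle_def
    using len k0 dist inZn arc out1 in1 by (intro exI[of _ xs]) auto
qed

end

context mvg2 begin

lemma subsp_V: "subsp V"
  unfolding subsp_def using M by (auto simp: T_def)

lemma exists_vec: assumes min: "\<And>j. 0 < j \<Longrightarrow> j < K0 \<Longrightarrow> \<not> fx j V"
  shows "has_directed_cycle Zn (move_arc M (int p)) K0"
proof -
  obtain v where v: "v \<in> V" "\<And>j. fx j {v} \<Longrightarrow> fx j V" using main[OF subsp_V] by blast
  have fK: "fx K0 V" using K0 by (simp add: fx_def)
  have dv: "fx j V \<longleftrightarrow> K0 dvd j" for j by (rule fx_dvd[OF subset_refl fK K0(1) min])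
  define x where "x = nm v"
  have x: "x \<in> Zn" unfolding x_def using nm_Zn[OF v(1)] .
  have xV: "x \<in> V" using Zn_V[OF x] .
  have xv: "cg x v" unfolding x_def using cg_nm[OF v(1)] by (rule cg_sym)
  have imp: "K0 dvd j" if "cg (It j x) x" for j
  proof -
    have "cg (It j v) (It j x)" using xv v(1) xV by (intro cg_It) (auto intro: cg_sym)
    then have "cg (It j v) v" using that xv by (meson cg_trans)
    then have "fx j V" using v(2) by (simp add: fx_def)
    then show ?thesis using dv by blast
  qed
  show ?thesis
  proof (rule cycle[OF x K0(1)])
    show "cg (It K0 x) x" using K0(2)[OF xV] .
    fix j assume "0 < j" "j < K0"
    then show "\<not> cg (It j x) x" using imp[of j] nat_dvd_not_less by blast
  qed
qed

end

theorem theorem3p6: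
  fixes m :: nat and M S :: "int mat" and R :: "rat mat"
  assumes "M \<in> carrier_mat m m" and "S \<in> carrier_mat m m"
    and "det (map_mat rat_of_int S) \<noteq> 0"
    and "\<exists>Sinv. similar_mat_wit (map_mat rat_of_int M) R (map_mat rat_of_int S) Sinv"
    and "is_rcf_of R M"
  shows "\<forall>p k. prime p \<and> gcd (det S) (int p) = 1 \<and> has_Zn_order M (int p) k
           \<longrightarrow> has_directed_cycle (Zn_vecs m (int p)) (move_arc M (int p)) k"
proof (intro allI impI)
  fix p k assume h: "prime p \<and> gcd (det S) (int p) = 1 \<and> has_Zn_order M (int p) k"
  have pr: "prime p" and ord: "has_Zn_order M (int p) k" using h by auto
  interpret mvg m M p
    using assms(1) prime_gt_1_nat[OF pr] by unfold_locales auto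
  have k0: "0 < k" and ak: "acts_as_id (M ^\<^sub>m k) (int p)"
    and mn: "\<And>j. 0 < j \<Longrightarrow> j < k \<Longrightarrow> \<not> acts_as_id (M ^\<^sub>m j) (int p)"
    using ord unfolding has_Zn_order_def by auto
  have fk: "fx k V" using ak acts_iff by blast
  interpret mvg2 m M p k
    using k0 fk pr by unfold_locales (auto simp: fx_def)
  show "has_directed_cycle (Zn_vecs m (int p)) (move_arc M (int p)) k"
    by (rule exists_vec) (use mn acts_iff in blast)
qed

end
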